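(* There are only finitely many positive integers $n$ for which $\left\lfloor n^{30}/1116 \right\rfloor$ is prime. *)

theory Defs
  imports Complex_Main "HOL-Computational_Algebra.Primes"
begin

end

theory Submission imports Defs "HOL-Number_Theory.Cong" begin

lemma crtA: fixes x a :: nat
  assumes "x mod 8 = a mod 8" "x mod 9 = a mod 9" "x mod 31 = a mod 31"
  shows "x mod 2232 = a mod 2232"
proof -
  have "[x = a] (mod 8 * 9)"
    by (rule coprime_cong_mult_nat) (use assms in \<open>auto simp: cong_def coprime_iff_gcd_eq_1 gcd_non_0_nat\<close>)
  hence "[x = a] (mod (8*9) * 31)"
    by (intro coprime_cong_mult_nat) (use assms in \<open>auto simp: cong_def coprime_iff_gcd_eq_1 gcd_non_0_nat\<close>)
  thus ?thesis by (simp add: cong_def)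
qed

lemma crtB: fixes x a :: nat
  assumes "x mod 8 = a mod 8" "x mod 27 = a mod 27" "x mod 31 = a mod 31"
  shows "x mod 6696 = a mod 6696"
proof -
  have "[x = a] (mod 8 * 27)"
    by (rule coprime_cong_mult_nat) (use assms in \<open>auto simp: cong_def coprime_iff_gcd_eq_1 gcd_non_0_nat\<close>)
  hence "[x = a] (mod (8*27) * 31)"
    by (intro coprime_cong_mult_nat) (use assms in \<open>auto simp: cong_def coprime_iff_gcd_eq_1 gcd_non_0_nat\<close>)
  thus ?thesis by (simp add: cong_def)
qed

lemma split2: fixes x :: nat shows "x mod 2232 = 1116 * (x div 1116 mod 2) + x mod 1116"
  using mod_mult2_eq[of x 1116 2] by simp
lemma split6: fixes x :: nat shows "x mod 6696 = 1116 * (x div 1116 mod 6) + x mod 1116"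
  using mod_mult2_eq[of x 1116 6] by simp

lemma dm: "1116*d + r = (c::nat) \<Longrightarrow> r < 1116 \<Longrightarrow> d = c div 1116 \<and> r = c mod 1116"
  by auto

lemma pick4: fixes x :: nat assumes h8: "x mod 8 = 0 \<or> x mod 8 = 1" and h31: "x mod 31 = 0 \<or> x mod 31 = 1"
  and c1: "x mod 8 = 0 \<Longrightarrow> x mod 31 = 0 \<Longrightarrow> x mod 2232 = 496 mod 2232"
  and c2: "x mod 8 = 0 \<Longrightarrow> x mod 31 = 1 \<Longrightarrow> x mod 2232 = 280 mod 2232"
  and c3: "x mod 8 = 1 \<Longrightarrow> x mod 31 = 0 \<Longrightarrow> x mod 2232 = 217 mod 2232"
  and c4: "x mod 8 = 1 \<Longrightarrow> x mod 31 = 1 \<Longrightarrow> x mod 2232 = 1 mod 2232" 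
  shows "x mod 2232 = 496 mod 2232 \<or> x mod 2232 = 280 mod 2232 \<or> x mod 2232 = 217 mod 2232 \<or> x mod 2232 = 1 mod 2232"
  using h8 h31 by (elim disjE) (simp_all only: c1 c2 c3 c4 simp_thms)

lemma comb: fixes x :: nat
  assumes h8: "x mod 8 = 0 \<or> x mod 8 = 1" and h27: "x mod 27 = 0 \<or> x mod 9 = 1"
    and h31: "x mod 31 = 0 \<or> x mod 31 = 1"
  shows "2 dvd (x div 1116) \<or> 3 dvd (x div 1116) \<or> x mod 1116 = 900"
proof -
  have m9: "x mod 9 = x mod 27 mod 9" by (simp add: mod_mod_cancel)
  have s2: "x mod 2232 = 1116 * (x div 1116 mod 2) + x mod 1116" by (rule split2)
  have s6: "x mod 6696 = 1116 * (x div 1116 mod 6) + x mod 1116" by (rule split6)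
  have lt: "x mod 1116 < 1116" by simp
  have e2: "x div 1116 mod 2 = 0 \<Longrightarrow> 2 dvd (x div 1116)" by presburger
  have "x div 1116 mod 3 = x div 1116 mod 6 mod 3" by (simp add: mod_mod_cancel)
  hence e3: "x div 1116 mod 6 = 3 \<Longrightarrow> 3 dvd (x div 1116)" by auto
  consider "x mod 8 = 1" "x mod 27 = 0" | "x mod 8 = 0" "x mod 9 = 0" | "x mod 9 = 1"
    using h8 h27 m9 by fastforce
  then show ?thesis
  proof cases
    case 1
    then consider "x mod 6696 = 4185 mod 6696" | "x mod 6696 = 3969 mod 6696"
      using h31 crtB[of x 4185] crtB[of x 3969] by fastforce
    then have "x div 1116 mod 6 = 3"
    proof cases
      case 1 then show ?thesis using dm[of "x div 1116 mod 6" "x mod 1116" 4185] s6 lt by simp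
    next
      case 2 then show ?thesis using dm[of "x div 1116 mod 6" "x mod 1116" 3969] s6 lt by simp
    qed
    then show ?thesis using e3 by blast
  next
    case 2
    then consider "x mod 2232 = 0 mod 2232" | "x mod 2232 = 2016 mod 2232"
      using h31 crtA[of x 0] crtA[of x 2016] by fastforce
    then show ?thesis
    proof cases
      case 1 then show ?thesis using dm[of "x div 1116 mod 2" "x mod 1116" 0] s2 lt e2 by simp
    next
      case 2 then show ?thesis using dm[of "x div 1116 mod 2" "x mod 1116" 2016] s2 lt by simp
    qed
  next
    case 3
    have c1: "x mod 2232 = 496 mod 2232" if "x mod 8 = 0" "x mod 31 = 0"
      using crtA[of x 496] that 3 by simp
    have c2: "x mod 2232 = 280 mod 2232" if "x mod 8 = 0" "x mod 31 = 1"
      using crtA[of x 280] that 3 by simp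
    have c3: "x mod 2232 = 217 mod 2232" if "x mod 8 = 1" "x mod 31 = 0"
      using crtA[of x 217] that 3 by simp
    have c4: "x mod 2232 = 1 mod 2232" if "x mod 8 = 1" "x mod 31 = 1"
      using crtA[of x 1] that 3 by simp
    consider "x mod 2232 = 496 mod 2232" | "x mod 2232 = 280 mod 2232"
       | "x mod 2232 = 217 mod 2232" | "x mod 2232 = 1 mod 2232"
      using pick4[OF h8 h31 c1 c2 c3 c4] by blast
    then have "x div 1116 mod 2 = 0"
    proof cases
      case 1 then show ?thesis using dm[of "x div 1116 mod 2" "x mod 1116" 496] s2 lt by simp
    next
      case 2 then show ?thesis using dm[of "x div 1116 mod 2" "x mod 1116" 280] s2 lt by simp
    next
      case 3 then show ?thesis using dm[of "x div 1116 mod 2" "x mod 1116" 217] s2 lt by simp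
    next
      case 4 then show ?thesis using dm[of "x div 1116 mod 2" "x mod 1116" 1] s2 lt by simp
    qed
    then show ?thesis using e2 by blast
  qed
qed

lemma e31: "\<forall>k\<in>{..<31::nat}. k^30 mod 31 = 0 \<or> k^30 mod 31 = 1"
  by (simp add: lessThan_nat_numeral)
lemma e27: "\<forall>k\<in>{..<27::nat}. k^30 mod 27 = 0 \<or> k^30 mod 27 mod 9 = 1"
  by (simp add: lessThan_nat_numeral)
lemma e8: "\<forall>k\<in>{..<8::nat}. k^30 mod 8 = 0 \<or> k^30 mod 8 = 1"
  by (simp add: lessThan_nat_numeral)

lemma resid: fixes n :: nat
  shows "n^30 mod 8 = 0 \<or> n^30 mod 8 = 1" "n^30 mod 27 = 0 \<or> n^30 mod 9 = 1"
    "n^30 mod 31 = 0 \<or> n^30 mod 31 = 1"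
proof -
  have "n mod 8 \<in> {..<8}" by simp
  with e8 have "(n mod 8)^30 mod 8 = 0 \<or> (n mod 8)^30 mod 8 = 1" by blast
  then show "n^30 mod 8 = 0 \<or> n^30 mod 8 = 1" by (simp add: power_mod)
  have "n mod 31 \<in> {..<31}" by simp
  with e31 have "(n mod 31)^30 mod 31 = 0 \<or> (n mod 31)^30 mod 31 = 1" by blast
  then show "n^30 mod 31 = 0 \<or> n^30 mod 31 = 1" by (simp add: power_mod)
  have "n mod 27 \<in> {..<27}" by simp
  with e27 have "(n mod 27)^30 mod 27 = 0 \<or> (n mod 27)^30 mod 27 mod 9 = 1" by blast
  then have "n^30 mod 27 = 0 \<or> n^30 mod 27 mod 9 = 1" by (simp add: power_mod)
  moreover have "n^30 mod 27 mod 9 = n^30 mod 9" by (simp add: mod_mod_cancel)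
  ultimately show "n^30 mod 27 = 0 \<or> n^30 mod 9 = 1" by simp
qed

lemma not_prime: fixes n :: nat assumes n2: "n \<ge> 2"
  shows "\<not> prime (n^30 div 1116)"
proof
  define q where "q = n^30 div 1116"
  assume pq: "prime (n^30 div 1116)"
  hence pq: "prime q" by (simp add: q_def)
  have "(2::nat)^30 \<le> n^30" using n2 by (rule power_mono) simp
  hence "(2::nat)^30 div 1116 \<le> q" unfolding q_def by (rule div_le_mono)
  hence qbig: "q > 3" by simp
  have c: "2 dvd q \<or> 3 dvd q \<or> n^30 mod 1116 = 900"
    using comb[OF resid] by (simp add: q_def)
  show False
  proof -
    { assume "2 dvd q"
      hence "2 = (1::nat) \<or> 2 = q" using pq unfolding prime_nat_iff by blast
      hence "q = 2" by simp
      hence False using qbig by simp }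
    moreover
    { assume "3 dvd q"
      hence "3 = (1::nat) \<or> 3 = q" using pq unfolding prime_nat_iff by blast
      hence "q = 3" by simp
      hence False using qbig by simp }
    moreover
    { assume r: "n^30 mod 1116 = 900"
      define m where "m = n^15"
      have "(2::nat)^15 \<le> m" unfolding m_def using n2 by (rule power_mono) simp
      hence m30: "m \<ge> 30" "m + 30 > 1116" "m - 30 > 1116" by simp_all
      have "n^30 = 1116 * q + 900" using r div_mult_mod_eq[of "n^30" 1116] unfolding q_def by (simp add: ac_simps)
      moreover have "n^30 = m * m" unfolding m_def by (simp flip: power_add)
      ultimately have "m * m = 1116 * q + 900" by simp
      moreover have "m * m = (m - 30) * (m + 30) + 900"
      proof -
        obtain k where k: "m = k + 30" using m30(1) le_Suc_ex by (metis add.commute)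
        show ?thesis unfolding k by (simp add: algebra_simps)
      qed
      ultimately have eq: "(m - 30) * (m + 30) = 1116 * q" by simp
      hence "q dvd (m - 30) * (m + 30)" by simp
      hence "q dvd (m - 30) \<or> q dvd (m + 30)" using pq prime_dvd_mult_iff by blast
      moreover
      { assume "q dvd (m - 30)"
        then obtain c where c: "m - 30 = q * c" by blast
        with eq have "q * (c * (m + 30)) = q * 1116" by (simp add: ac_simps)
        hence "c * (m + 30) = 1116" using pq by (simp add: prime_gt_0_nat)
        moreover have "c \<ge> 1" using c m30 by (cases c) auto
        ultimately have False using m30 by (metis le_add2 linorder_not_le mult_le_mono1 mult_1 order.trans) }
      moreover
      { assume "q dvd (m + 30)"
        then obtain c where c: "m + 30 = q * c" by blast
        with eq have "q * (c * (m - 30)) = q * 1116" by (simp add: ac_simps)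
        hence "c * (m - 30) = 1116" using pq by (simp add: prime_gt_0_nat)
        moreover have "c \<ge> 1" using c m30 by (cases c) auto
        ultimately have False using m30 by (metis le_add2 linorder_not_le mult_le_mono1 mult_1 order.trans) }
      ultimately have False by blast }
    ultimately show False using c by blast
  qed
qed

theorem theorem8:
  shows "finite {n::nat. n > 0 \<and> prime (\<lfloor>real n ^ 30 / 1116\<rfloor>)}"
proof -
  have fl: "\<lfloor>real n ^ 30 / 1116\<rfloor> = int (n^30 div 1116)" for n :: nat
    using floor_divide_of_nat_eq[of "n^30" 1116] by simp
  have "{n::nat. n > 0 \<and> prime (\<lfloor>real n ^ 30 / 1116\<rfloor>)} \<subseteq> {..1}"
  proof
    fix n assume "n \<in> {n::nat. n > 0 \<and> prime (\<lfloor>real n ^ 30 / 1116\<rfloor>)}"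
    hence "prime (n^30 div 1116)" by (simp add: fl)
    with not_prime[of n] show "n \<in> {..1}" by (cases "n \<ge> 2") auto
  qed
  thus ?thesis by (rule finite_subset) simp
qed
end
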